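(* Let $n\ge1$, $A=\begin{bmatrix}1&2\\0&1\end{bmatrix}$, $B=\begin{bmatrix}1&0\\2&1\end{bmatrix}$, $\Gamma(2)$ the principal congruence subgroup of level $2$ (generated in $\mathrm{PSL}_2(\mathbb{Z})$ by $A,B$), and $\Phi(n)=\langle A^n,B^n,\Gamma(2)'\rangle$ where $\Gamma(2)'$ is the commutator subgroup of $\Gamma(2)$. Let $\pi:\bar{\mathfrak{H}}\to\bar{\mathfrak{H}}/\Phi(n)=X_{\Phi(n)}$ be the quotient map, where $\bar{\mathfrak{H}}=\mathfrak{H}\cup\mathbb{P}^1(\mathbb{Q})$ with $\mathrm{SL}_2(\mathbb{Z})$ acting by fractional linear transformations. Then: (1) the actions of $A$ and $B$ on $X_{\Phi(n)}$ commute; (2) $\pi(A^k\cdot 1)=\pi(B^k\cdot 1)$ for every $k\in\mathbb{Z}$.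
   Context: Since $\Phi(n)$ contains the commutator subgroup of $\Gamma(2)$, it is normal in $\Gamma(2)$, so $\Gamma(2)$ acts on $X_{\Phi(n)}$ via $\pi(z)\mapsto\pi(g z)$. Here $1\in\mathbb{P}^1(\mathbb{Q})\subset\bar{\mathfrak{H}}$. *)

theory Defs
  imports Complex_Main "HOL-Algebra.Generated_Groups"
begin

text \<open>Integer 2x2 matrices [[a,b],[c,d]] represented as tuples (a,b,c,d).\<close>
type_synonym mat2 = "int \<times> int \<times> int \<times> int"

fun mat2_mult :: "mat2 \<Rightarrow> mat2 \<Rightarrow> mat2" where
  "mat2_mult (a,b,c,d) (a',b',c',d') =
     (a*a' + b*c', a*b' + b*d', c*a' + d*c', c*b' + d*d')"

fun mat2_det :: "mat2 \<Rightarrow> int" where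
  "mat2_det (a,b,c,d) = a*d - b*c"

text \<open>The group SL_2(Z).  PSL_2(Z) is handled by working with preimages in SL_2(Z):
  every subgroup of PSL_2(Z) below is represented by its preimage, which contains -I.\<close>
definition SL2Z :: "mat2 monoid" where
  "SL2Z = \<lparr> carrier = {M. mat2_det M = 1}, mult = mat2_mult, one = (1,0,0,1) \<rparr>"

definition matA :: mat2 where "matA = (1,2,0,1)"
definition matB :: mat2 where "matB = (1,0,2,1)"
definition negI :: mat2 where "negI = (-1,0,0,-1)"

definition Gamma2 :: "mat2 set" where
  "Gamma2 = generate SL2Z {matA, matB, negI}"

definition Phi :: "nat \<Rightarrow> mat2 set" where
  "Phi n = generate SL2Z ({matA [^]\<^bsub>SL2Z\<^esub> n, matB [^]\<^bsub>SL2Z\<^esub> n, negI} \<union> derived SL2Z Gamma2)"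

datatype hpoint = Hpt complex | Cusp rat | Infty

definition Hbar :: "hpoint set" where
  "Hbar = {Hpt z | z. Im z > 0} \<union> range Cusp \<union> {Infty}"

fun mact :: "mat2 \<Rightarrow> hpoint \<Rightarrow> hpoint" where
  "mact (a,b,c,d) (Hpt z) = Hpt ((of_int a * z + of_int b) / (of_int c * z + of_int d))"
| "mact (a,b,c,d) (Cusp q) =
     (if of_int c * q + of_int d = 0 then Infty
      else Cusp ((of_int a * q + of_int b) / (of_int c * q + of_int d)))"
| "mact (a,b,c,d) Infty = (if c = 0 then Infty else Cusp (of_int a / of_int c))"

definition piPhi :: "nat \<Rightarrow> hpoint \<Rightarrow> hpoint set" where
  "piPhi n z = {w. \<exists>g \<in> Phi n. w = mact g z}"

end

theory Submission
  imports Defs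
begin

lemma det_mult: "mat2_det (mat2_mult M N) = mat2_det M * mat2_det N"
  by (cases M; cases N) (simp add: algebra_simps)

lemma SL2Z_carrier: "carrier SL2Z = {M. mat2_det M = 1}"
  by (simp add: SL2Z_def)
lemma SL2Z_one: "\<one>\<^bsub>SL2Z\<^esub> = (1,0,0,1)"
  by (simp add: SL2Z_def)
lemma SL2Z_mult: "x \<otimes>\<^bsub>SL2Z\<^esub> y = mat2_mult x y"
  by (simp_all add: SL2Z_def)

lemma group_SL2Z: "group SL2Z"
proof (rule groupI)
  fix x :: mat2 assume x: "x \<in> carrier SL2Z"
  obtain a b c d where xe: "x = (a,b,c,d)" by (cases x)
  have "(d,-b,-c,a) \<in> carrier SL2Z" "(d,-b,-c,a) \<otimes>\<^bsub>SL2Z\<^esub> x = \<one>\<^bsub>SL2Z\<^esub>"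
    using x unfolding xe by (auto simp: SL2Z_carrier SL2Z_one SL2Z_mult algebra_simps)
  then show "\<exists>y\<in>carrier SL2Z. y \<otimes>\<^bsub>SL2Z\<^esub> x = \<one>\<^bsub>SL2Z\<^esub>" by blast
next
  fix x y z :: mat2
  show "x \<otimes>\<^bsub>SL2Z\<^esub> y \<otimes>\<^bsub>SL2Z\<^esub> z = x \<otimes>\<^bsub>SL2Z\<^esub> (y \<otimes>\<^bsub>SL2Z\<^esub> z)"
    by (cases x; cases y; cases z) (simp add: algebra_simps SL2Z_mult)
next
  fix x :: mat2 show "\<one>\<^bsub>SL2Z\<^esub> \<otimes>\<^bsub>SL2Z\<^esub> x = x" by (cases x) (simp add: SL2Z_mult SL2Z_one)
qed (auto simp: det_mult SL2Z_mult SL2Z_carrier SL2Z_one)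

lemma Hpt_denom:
  assumes "a*d - b*c = (1::int)" "Im z > 0"
  shows "of_int c * z + of_int d \<noteq> 0"
proof
  assume h: "of_int c * z + of_int d = 0"
  show False
  proof (cases "c = 0")
    case True then show ?thesis using h assms(1) by simp
  next
    case False
    have "Im (of_int c * z + of_int d) = of_int c * Im z" by simp
    then show ?thesis using h False assms(2) by simp
  qed
qed

lemma mact_Hbar:
  assumes "mat2_det M = 1" "z \<in> Hbar" shows "mact M z \<in> Hbar"
proof -
  obtain a b c d where M: "M = (a,b,c,d)" by (cases M)
  show ?thesis
  proof (cases z)
    case (Hpt w)
    with assms have w: "Im w > 0" by (auto simp: Hbar_def)
    have det: "a*d - b*c = 1" using assms M by simp
    have "Im ((of_int a * w + of_int b) / (of_int c * w + of_int d))
        = Im w * of_int (a*d - b*c) / ((Re (of_int c * w + of_int d))\<^sup>2 + (Im (of_int c * w + of_int d))\<^sup>2)"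
      by (simp add: Im_divide algebra_simps)
    also have "\<dots> > 0" using w det Hpt_denom[OF det w]
      by (simp add: sum_power2_gt_zero_iff complex_eq_iff)
    finally show ?thesis using Hpt M by (auto simp: Hbar_def)
  qed (auto simp: Hbar_def M)
qed

lemma mob:
  fixes a b c d p q :: "'a::field"
  assumes "q \<noteq> 0"
  shows "(a*(p/q) + b)/(c*(p/q) + d) = (a*p+b*q)/(c*p+d*q)"
proof -
  have 1: "a*(p/q)+b = (a*p+b*q)/q" using assms by (simp add: field_simps)
  have 2: "c*(p/q)+d = (c*p+d*q)/q" using assms by (simp add: field_simps)
  have 3: "(X/q)/(Y/q) = X/Y" for X Y :: 'a
    using assms by (cases "Y = 0") (simp_all add: divide_divide_eq_left divide_divide_eq_right)
  show ?thesis unfolding 1 2 3 ..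
qed

lemma mact_mult:
  assumes "mat2_det M = 1" "mat2_det N = 1" "z \<in> Hbar"
  shows "mact (mat2_mult M N) z = mact M (mact N z)"
proof -
  obtain a b c d where M: "M = (a,b,c,d)" by (cases M)
  obtain a' b' c' d' where N: "N = (a',b',c',d')" by (cases N)
  have dM: "a*d - b*c = 1" and dN: "a'*d' - b'*c' = 1" using assms M N by auto
  show ?thesis
  proof (cases z)
    case (Hpt w)
    with assms have w: "Im w > 0" by (auto simp: Hbar_def)
    have q: "of_int c' * w + of_int d' \<noteq> 0" using Hpt_denom[OF dN w] .
    show ?thesis unfolding M N Hpt mat2_mult.simps mact.simps
      by (subst mob[OF q]) (simp add: algebra_simps)
  next
    case (Cusp q)
    define P where "P = of_int a' * q + of_int b'"
    define Q where "Q = of_int c' * q + of_int d'"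
    have key: "of_int a' * Q - of_int c' * P = (1::rat)"
      unfolding P_def Q_def using arg_cong[OF dN, of "of_int :: int \<Rightarrow> rat"]
      by (simp add: algebra_simps)
    have D: "of_int (c * a' + d * c') * q + of_int (c * b' + d * d') = of_int c * P + of_int d * Q"
      unfolding P_def Q_def by (simp add: algebra_simps)
    have Nu: "of_int (a * a' + b * c') * q + of_int (a * b' + b * d') = of_int a * P + of_int b * Q"
      unfolding P_def Q_def by (simp add: algebra_simps)
    show ?thesis
    proof (cases "Q = 0")
      case True
      then have "P \<noteq> 0" using key by auto
      then show ?thesis using True unfolding M N Cusp mat2_mult.simps mact.simps D Nu
        by (simp add: P_def[symmetric] Q_def[symmetric])
    next
      case False
      have e: "of_int c * P / Q + of_int d = (of_int c * P + of_int d * Q) / Q"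
        using False by (simp add: field_simps)
      have e2: "(of_int a * P / Q + of_int b) / (of_int c * P / Q + of_int d) = (of_int a * P + of_int b * Q) / (of_int c * P + of_int d * Q)"
        using mob[OF False, of "of_int a" P "of_int b" "of_int c" "of_int d"] by simp
      show ?thesis using False unfolding M N Cusp mat2_mult.simps mact.simps D Nu
        by (simp add: P_def[symmetric] Q_def[symmetric] e e2 del: divide_eq_0_iff) (simp add: field_simps)
    qed
  next
    case Infty
    show ?thesis
    proof (cases "c' = 0")
      case True
      then have "a' \<noteq> 0" using dN by auto
      then show ?thesis using True unfolding M N Infty mat2_mult.simps mact.simps by simp
    next
      case False
      have e: "rat_of_int c * of_int a' / of_int c' + of_int d = (of_int c * of_int a' + of_int d * of_int c') / of_int c'"
        using False by (simp add: field_simps)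
      have e2: "(rat_of_int a * of_int a' / of_int c' + of_int b) / (of_int c * of_int a' / of_int c' + of_int d)
         = (of_int a * of_int a' + of_int b * of_int c') / (of_int c * of_int a' + of_int d * of_int c')"
        using mob[of "rat_of_int c'" "of_int a" "of_int a'" "of_int b" "of_int c" "of_int d"] False by simp
      have e3: "(rat_of_int c * of_int a' + of_int d * of_int c' = 0) = (c*a'+d*c' = 0)"
        by (metis of_int_add of_int_mult of_int_eq_0_iff)
      have e4: "((rat_of_int c * of_int a' + of_int d * of_int c') / of_int c' = 0) = (c*a'+d*c' = 0)"
        using e3 False by simp
      show ?thesis using False unfolding M N Infty mat2_mult.simps mact.simps
        by (simp add: e e2 e4 del: divide_eq_0_iff) (simp add: field_simps)
    qed
  qed
qed


interpretation G: group SL2Z by (rule group_SL2Z)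

lemma mact_mult':
  "x \<in> carrier SL2Z \<Longrightarrow> y \<in> carrier SL2Z \<Longrightarrow> z \<in> Hbar \<Longrightarrow>
   mact (x \<otimes>\<^bsub>SL2Z\<^esub> y) z = mact x (mact y z)"
  by (simp add: SL2Z_mult mact_mult SL2Z_carrier)

lemma mact_Hbar': "x \<in> carrier SL2Z \<Longrightarrow> z \<in> Hbar \<Longrightarrow> mact x z \<in> Hbar"
  by (simp add: mact_Hbar SL2Z_carrier)

lemma G_cancel [simp]:
  "x \<in> carrier SL2Z \<Longrightarrow> y \<in> carrier SL2Z \<Longrightarrow> inv\<^bsub>SL2Z\<^esub> x \<otimes>\<^bsub>SL2Z\<^esub> (x \<otimes>\<^bsub>SL2Z\<^esub> y) = y"
  "x \<in> carrier SL2Z \<Longrightarrow> y \<in> carrier SL2Z \<Longrightarrow> x \<otimes>\<^bsub>SL2Z\<^esub> (inv\<^bsub>SL2Z\<^esub> x \<otimes>\<^bsub>SL2Z\<^esub> y) = y"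
  by (simp_all add: G.m_assoc[symmetric])

lemma mact_one: "mact \<one>\<^bsub>SL2Z\<^esub> z = z"
  by (cases z) (auto simp: SL2Z_one)

lemma gens_carrier [simp]: "matA \<in> carrier SL2Z" "matB \<in> carrier SL2Z" "negI \<in> carrier SL2Z"
  by (simp_all add: matA_def matB_def negI_def SL2Z_carrier)

lemma Gamma2_sub: "subgroup Gamma2 SL2Z"
  unfolding Gamma2_def by (rule G.generate_is_subgroup) auto

lemma Gamma2_gens [simp]: "matA \<in> Gamma2" "matB \<in> Gamma2"
  unfolding Gamma2_def by (auto intro: generate.incl)

lemma Gamma2_carrier: "x \<in> Gamma2 \<Longrightarrow> x \<in> carrier SL2Z"
  using subgroup.subset[OF Gamma2_sub] by auto

lemma derived_sub: "derived SL2Z Gamma2 \<subseteq> Gamma2"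
  by (rule G.derived_incl[OF order_refl Gamma2_sub])

lemma Phi_gens_sub: fixes n :: nat shows "{matA [^]\<^bsub>SL2Z\<^esub> n, matB [^]\<^bsub>SL2Z\<^esub> n, negI} \<union> derived SL2Z Gamma2 \<subseteq> Gamma2"
proof -
  have "negI \<in> Gamma2" unfolding Gamma2_def by (auto intro: generate.incl)
  moreover have "matA [^]\<^bsub>SL2Z\<^esub> int n \<in> Gamma2" "matB [^]\<^bsub>SL2Z\<^esub> int n \<in> Gamma2"
    by (rule G.subgroup_int_pow_closed[OF Gamma2_sub], simp)+
  then have "matA [^]\<^bsub>SL2Z\<^esub> n \<in> Gamma2" "matB [^]\<^bsub>SL2Z\<^esub> n \<in> Gamma2"
    by (simp_all only: int_pow_int)
  ultimately show ?thesis using derived_sub by auto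
qed

lemma Phi_sub: "subgroup (Phi n) SL2Z"
  unfolding Phi_def by (rule G.generate_is_subgroup) (use Phi_gens_sub Gamma2_carrier in blast)

lemma Phi_Gamma2: "Phi n \<subseteq> Gamma2"
  unfolding Phi_def by (rule G.generate_subgroup_incl[OF Phi_gens_sub Gamma2_sub])

lemma comm_Phi:
  assumes "x \<in> Gamma2" "y \<in> Gamma2"
  shows "x \<otimes>\<^bsub>SL2Z\<^esub> y \<otimes>\<^bsub>SL2Z\<^esub> inv\<^bsub>SL2Z\<^esub> x \<otimes>\<^bsub>SL2Z\<^esub> inv\<^bsub>SL2Z\<^esub> y \<in> Phi n"
proof -
  have "x \<otimes>\<^bsub>SL2Z\<^esub> y \<otimes>\<^bsub>SL2Z\<^esub> inv\<^bsub>SL2Z\<^esub> x \<otimes>\<^bsub>SL2Z\<^esub> inv\<^bsub>SL2Z\<^esub> y \<in> derived SL2Z Gamma2"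
    unfolding derived_def using assms by (intro generate.incl) blast
  then show ?thesis unfolding Phi_def by (intro generate.incl) blast
qed

definition rel :: "nat \<Rightarrow> hpoint \<Rightarrow> hpoint \<Rightarrow> bool" where
  "rel n w w' \<longleftrightarrow> (\<exists>g \<in> Phi n. w = mact g w')"

lemma Phi_carrier: "g \<in> Phi n \<Longrightarrow> g \<in> carrier SL2Z"
  using subgroup.subset[OF Phi_sub] by auto

lemma rel_refl: "rel n w w"
  unfolding rel_def using subgroup.one_closed[OF Phi_sub] mact_one by metis

lemma rel_trans:
  assumes "rel n w w'" "rel n w' w''" "w'' \<in> Hbar"
  shows "rel n w w''"
proof -
  obtain g h where g: "g \<in> Phi n" "w = mact g w'" and h: "h \<in> Phi n" "w' = mact h w''"
    using assms unfolding rel_def by blast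
  have "w = mact (g \<otimes>\<^bsub>SL2Z\<^esub> h) w''"
    using g h assms(3) Phi_carrier by (simp add: mact_mult')
  moreover have "g \<otimes>\<^bsub>SL2Z\<^esub> h \<in> Phi n" using subgroup.m_closed[OF Phi_sub] g h by blast
  ultimately show ?thesis unfolding rel_def by blast
qed

lemma rel_pi:
  assumes "rel n w w'" "w' \<in> Hbar"
  shows "piPhi n w = piPhi n w'"
proof -
  obtain g where g: "g \<in> Phi n" "w = mact g w'" using assms unfolding rel_def by blast
  have gc: "g \<in> carrier SL2Z" using g Phi_carrier by blast
  show ?thesis
  proof (intro equalityI subsetI)
    fix u assume "u \<in> piPhi n w"
    then obtain h where h: "h \<in> Phi n" "u = mact h w" unfolding piPhi_def by blast
    have "u = mact (h \<otimes>\<^bsub>SL2Z\<^esub> g) w'" using h g gc assms(2) Phi_carrier by (simp add: mact_mult')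
    moreover have "h \<otimes>\<^bsub>SL2Z\<^esub> g \<in> Phi n" using subgroup.m_closed[OF Phi_sub] g h by blast
    ultimately show "u \<in> piPhi n w'" unfolding piPhi_def by blast
  next
    fix u assume "u \<in> piPhi n w'"
    then obtain h where h: "h \<in> Phi n" "u = mact h w'" unfolding piPhi_def by blast
    have hc: "h \<in> carrier SL2Z" using h Phi_carrier by blast
    have "mact (h \<otimes>\<^bsub>SL2Z\<^esub> inv\<^bsub>SL2Z\<^esub> g) w = mact (h \<otimes>\<^bsub>SL2Z\<^esub> inv\<^bsub>SL2Z\<^esub> g \<otimes>\<^bsub>SL2Z\<^esub> g) w'"
      using g gc hc assms(2) by (simp add: mact_mult')
    also have "h \<otimes>\<^bsub>SL2Z\<^esub> inv\<^bsub>SL2Z\<^esub> g \<otimes>\<^bsub>SL2Z\<^esub> g = h"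
      using gc hc by (simp add: G.m_assoc)
    finally have "u = mact (h \<otimes>\<^bsub>SL2Z\<^esub> inv\<^bsub>SL2Z\<^esub> g) w" using h by simp
    moreover have "h \<otimes>\<^bsub>SL2Z\<^esub> inv\<^bsub>SL2Z\<^esub> g \<in> Phi n"
      using subgroup.m_closed[OF Phi_sub] subgroup.m_inv_closed[OF Phi_sub] g h by blast
    ultimately show "u \<in> piPhi n w" unfolding piPhi_def by blast
  qed
qed

lemma comm_rel:
  assumes "x \<in> Gamma2" "y \<in> Gamma2" "u \<in> Hbar"
  shows "rel n (mact (x \<otimes>\<^bsub>SL2Z\<^esub> y) u) (mact (y \<otimes>\<^bsub>SL2Z\<^esub> x) u)"
proof -
  let ?g = "x \<otimes>\<^bsub>SL2Z\<^esub> y \<otimes>\<^bsub>SL2Z\<^esub> inv\<^bsub>SL2Z\<^esub> x \<otimes>\<^bsub>SL2Z\<^esub> inv\<^bsub>SL2Z\<^esub> y"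
  have xc: "x \<in> carrier SL2Z" "y \<in> carrier SL2Z" using assms Gamma2_carrier by auto
  have "?g \<otimes>\<^bsub>SL2Z\<^esub> (y \<otimes>\<^bsub>SL2Z\<^esub> x) = x \<otimes>\<^bsub>SL2Z\<^esub> y"
    using xc by (simp add: G.m_assoc)
  then have "mact (x \<otimes>\<^bsub>SL2Z\<^esub> y) u = mact ?g (mact (y \<otimes>\<^bsub>SL2Z\<^esub> x) u)"
    using xc assms(3) by (metis mact_mult' G.m_closed G.inv_closed)
  then show ?thesis unfolding rel_def using comm_Phi[OF assms(1,2)] by blast
qed

lemma cong_rel:
  assumes "M \<in> Gamma2" "rel n w w'" "w' \<in> Hbar"
  shows "rel n (mact M w) (mact M w')"
proof -
  obtain g where g: "g \<in> Phi n" "w = mact g w'" using assms unfolding rel_def by blast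
  have gG: "g \<in> Gamma2" using g Phi_Gamma2 by blast
  have gc: "g \<in> carrier SL2Z" and Mc: "M \<in> carrier SL2Z" using gG assms Gamma2_carrier by auto
  let ?h = "M \<otimes>\<^bsub>SL2Z\<^esub> g \<otimes>\<^bsub>SL2Z\<^esub> inv\<^bsub>SL2Z\<^esub> M \<otimes>\<^bsub>SL2Z\<^esub> inv\<^bsub>SL2Z\<^esub> g \<otimes>\<^bsub>SL2Z\<^esub> g"
  have hP: "?h \<in> Phi n"
    using subgroup.m_closed[OF Phi_sub] comm_Phi[OF assms(1) gG] g by blast
  have "?h \<otimes>\<^bsub>SL2Z\<^esub> M = M \<otimes>\<^bsub>SL2Z\<^esub> g" using gc Mc by (simp add: G.m_assoc)
  then have "mact M w = mact ?h (mact M w')"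
    using g gc Mc assms(3) hP Phi_carrier by (metis mact_mult')
  then show ?thesis unfolding rel_def using hP by blast
qed


lemma Cusp_Hbar [simp]: "mact M (Cusp q) \<in> Hbar" "Cusp q \<in> Hbar"
  by (cases M; auto simp: Hbar_def)+

lemma inv_A: "inv\<^bsub>SL2Z\<^esub> matA = (1,-2,0,1)"
  by (rule G.inv_equality) (simp_all add: SL2Z_mult SL2Z_one SL2Z_carrier matA_def)

lemma inv_B: "inv\<^bsub>SL2Z\<^esub> matB = (1,0,-2,1)"
  by (rule G.inv_equality) (simp_all add: SL2Z_mult SL2Z_one SL2Z_carrier matB_def)

lemma inv_Cusp1: "mact (inv\<^bsub>SL2Z\<^esub> matA) (Cusp 1) = mact (inv\<^bsub>SL2Z\<^esub> matB) (Cusp 1)"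
  by (simp add: inv_A inv_B)

lemma inv_Gamma2 [simp]: "inv\<^bsub>SL2Z\<^esub> matA \<in> Gamma2" "inv\<^bsub>SL2Z\<^esub> matB \<in> Gamma2"
  using subgroup.m_inv_closed[OF Gamma2_sub] by auto

lemma pow_Gamma2 [simp]: "x \<in> Gamma2 \<Longrightarrow> x [^]\<^bsub>SL2Z\<^esub> (k::int) \<in> Gamma2"
  by (rule G.subgroup_int_pow_closed[OF Gamma2_sub])

lemma rel_AB1: "rel n (mact matA (Cusp 1)) (mact matB (Cusp 1))"
proof -
  let ?a = matA and ?b = matB and ?ai = "inv\<^bsub>SL2Z\<^esub> matA" and ?bi = "inv\<^bsub>SL2Z\<^esub> matB"
  have "mact ?a (Cusp 1) = mact (?a \<otimes>\<^bsub>SL2Z\<^esub> ?b \<otimes>\<^bsub>SL2Z\<^esub> ?bi) (Cusp 1)"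
    by (simp add: G.m_assoc)
  also have "\<dots> = mact (?a \<otimes>\<^bsub>SL2Z\<^esub> ?b) (mact ?bi (Cusp 1))"
    by (simp add: mact_mult')
  also have "\<dots> = mact (?a \<otimes>\<^bsub>SL2Z\<^esub> ?b) (mact ?ai (Cusp 1))"
    by (simp add: inv_Cusp1)
  finally have 1: "mact ?a (Cusp 1) = mact (?a \<otimes>\<^bsub>SL2Z\<^esub> ?b) (mact ?ai (Cusp 1))" .
  have "mact (?b \<otimes>\<^bsub>SL2Z\<^esub> ?a) (mact ?ai (Cusp 1)) = mact (?b \<otimes>\<^bsub>SL2Z\<^esub> ?a \<otimes>\<^bsub>SL2Z\<^esub> ?ai) (Cusp 1)"
    by (simp add: mact_mult')
  also have "\<dots> = mact ?b (Cusp 1)"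
    by (simp add: G.m_assoc)
  finally have 2: "mact (?b \<otimes>\<^bsub>SL2Z\<^esub> ?a) (mact ?ai (Cusp 1)) = mact ?b (Cusp 1)" .
  show ?thesis
    using comm_rel[of ?a ?b "mact ?ai (Cusp 1)" n] unfolding 1 2 by simp
qed

theorem lemma3p1:
  fixes n :: nat
  assumes "n \<ge> 1"
  shows "(\<forall>z \<in> Hbar. piPhi n (mact matA (mact matB z)) = piPhi n (mact matB (mact matA z)))
       \<and> (\<forall>k :: int. piPhi n (mact (matA [^]\<^bsub>SL2Z\<^esub> k) (Cusp 1))
                     = piPhi n (mact (matB [^]\<^bsub>SL2Z\<^esub> k) (Cusp 1)))"
proof (intro conjI ballI allI)
  fix z assume z: "z \<in> Hbar"
  have "rel n (mact (matA \<otimes>\<^bsub>SL2Z\<^esub> matB) z) (mact (matB \<otimes>\<^bsub>SL2Z\<^esub> matA) z)"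
    by (rule comm_rel) (simp_all add: z)
  then have "rel n (mact matA (mact matB z)) (mact matB (mact matA z))"
    using z by (simp add: mact_mult')
  then show "piPhi n (mact matA (mact matB z)) = piPhi n (mact matB (mact matA z))"
    by (rule rel_pi) (simp add: z mact_Hbar')
next
  fix k :: int
  let ?A = "\<lambda>k::int. matA [^]\<^bsub>SL2Z\<^esub> k" and ?B = "\<lambda>k::int. matB [^]\<^bsub>SL2Z\<^esub> k"
  let ?C = "Cusp 1"
  have Bc: "?B i \<in> carrier SL2Z" for i by simp
  have "rel n (mact (?A k) ?C) (mact (?B k) ?C)"
  proof (induction k rule: int_induct[where k=0])
    case base
    then show ?case by (simp add: rel_refl)
  next
    case (step1 i)
    have eA: "?A (i+1) = matA \<otimes>\<^bsub>SL2Z\<^esub> ?A i"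
      using G.int_pow_mult[of matA 1 i] by (simp add: add.commute)
    have eB: "?B (i+1) = ?B i \<otimes>\<^bsub>SL2Z\<^esub> matB"
      using G.int_pow_mult[of matB i 1] by simp
    have r1: "rel n (mact (?A (i+1)) ?C) (mact matA (mact (?B i) ?C))"
      unfolding eA using cong_rel[OF Gamma2_gens(1) step1(2)] by (simp add: mact_mult')
    have r2: "rel n (mact matA (mact (?B i) ?C)) (mact (?B i) (mact matA ?C))"
      using comm_rel[of matA "?B i" ?C n] by (simp add: mact_mult')
    have r3: "rel n (mact (?B i) (mact matA ?C)) (mact (?B (i+1)) ?C)"
      unfolding eB using cong_rel[OF pow_Gamma2[OF Gamma2_gens(2)] rel_AB1] by (simp add: mact_mult')
    show ?case using rel_trans[OF rel_trans[OF r1 r2] r3] by (simp add: mact_Hbar')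
  next
    case (step2 i)
    have eA: "?A (i-1) = inv\<^bsub>SL2Z\<^esub> matA \<otimes>\<^bsub>SL2Z\<^esub> ?A i"
      using G.int_pow_mult[of matA "-1" i] by (simp add: G.int_pow_neg)
    have eB: "?B (i-1) = ?B i \<otimes>\<^bsub>SL2Z\<^esub> inv\<^bsub>SL2Z\<^esub> matB"
      using G.int_pow_mult[of matB i "-1"] by (simp add: G.int_pow_neg)
    have r1: "rel n (mact (?A (i-1)) ?C) (mact (inv\<^bsub>SL2Z\<^esub> matA) (mact (?B i) ?C))"
      unfolding eA using cong_rel[OF inv_Gamma2(1) step2(2)] by (simp add: mact_mult')
    have r2: "rel n (mact (inv\<^bsub>SL2Z\<^esub> matA) (mact (?B i) ?C)) (mact (?B i) (mact (inv\<^bsub>SL2Z\<^esub> matA) ?C))"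
      using comm_rel[of "inv\<^bsub>SL2Z\<^esub> matA" "?B i" ?C n] by (simp add: mact_mult')
    have e3: "mact (?B i) (mact (inv\<^bsub>SL2Z\<^esub> matA) ?C) = mact (?B (i-1)) ?C"
      unfolding eB inv_Cusp1 by (simp add: mact_mult')
    show ?case using rel_trans[OF r1 r2] e3 by simp
  qed
  then show "piPhi n (mact (?A k) ?C) = piPhi n (mact (?B k) ?C)"
    by (rule rel_pi) simp
qed

end
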